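(* Let $p>3$ be a prime, $q=p^e$, and let $n\ge 0$ be an even integer. Then: (i) $D_{n,3}(1,x)=\dfrac{1}{2^n}f_n(1-4x)$ for every $x\in\mathbb{F}_q$; (ii) $D_{n,3}(1,x)$ is a permutation polynomial of $\mathbb{F}_q$ if and only if $f_n(x)$ is a permutation polynomial of $\mathbb{F}_q$.
   Context: For $n\ge 1$ and $a\in\mathbb{F}_q$, $D_{n,3}(a,x)=\sum_{i=0}^{\lfloor n/2\rfloor}\frac{n-3i}{n-i}\binom{n-i}{i}(-x)^i a^{n-2i}\in\mathbb{F}_q[x]$, where each coefficient $\frac{n-3i}{n-i}\binom{n-i}{i}$ is an integer read modulo $p$; and $D_{0,3}(a,x)=-1$. For even $n\ge0$, $f_n(x)\in\mathbb{Z}[x]$ (viewed in $\mathbb{F}_q[x]$ by reduction mod $p$) is $$f_n(x)=-x^{n/2}+\sum_{j=0}^{n/2-1}\frac{3n-8j-1}{n+1}\binom{n+1}{2j+1}x^j,$$ where $\frac{3n-8j-1}{n+1}\binom{n+1}{2j+1}=3\binom{n}{2j+1}-\binom{n}{2j}$ is an integer. A polynomial $g\in\mathbb{F}_q[x]$ is a permutation polynomial of $\mathbb{F}_q$ if $c\mapsto g(c)$ is a bijection $\mathbb{F}_q\to\mathbb{F}_q$. *)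

theory Defs
  imports "HOL-Computational_Algebra.Polynomial" "HOL-Library.Cardinality"
begin

text \<open>Integer coefficient (n-3i)/(n-i) * binom(n-i,i) (an exact integer for n \<ge> 1, i \<le> n/2).\<close>
definition D3_coeff :: "nat \<Rightarrow> nat \<Rightarrow> int" where
  "D3_coeff n i = ((int n - 3 * int i) * int ((n - i) choose i)) div int (n - i)"

definition D3 :: "nat \<Rightarrow> 'a::comm_ring_1 \<Rightarrow> 'a poly" where
  "D3 n a = (if n = 0 then [:-1:] else
     (\<Sum>i\<le>n div 2. smult (of_int (D3_coeff n i) * a ^ (n - 2 * i)) ([:0, -1:] ^ i)))"

definition f_poly :: "nat \<Rightarrow> 'a::comm_ring_1 poly" where
  "f_poly n = - monom 1 (n div 2) +
     (\<Sum>j<n div 2. monom (of_int (3 * int (n choose (2*j+1)) - int (n choose (2*j)))) j)"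

definition permutation_polynomial :: "'a::comm_semiring_0 poly \<Rightarrow> bool" where
  "permutation_polynomial g \<longleftrightarrow> bij (\<lambda>c. poly g c)"

end

theory Submission
  imports Defs
begin

lemma sum_range_cut:
  fixes k m :: nat
  assumes "\<And>j. k < j \<Longrightarrow> g j = 0" "k \<le> m"
  shows "sum g {..m} = sum g {..k}"
proof (rule sum.mono_neutral_right)
  show "\<forall>i\<in>{..m} - {..k}. g i = 0"
  proof
    fix i assume "i \<in> {..m} - {..k}"
    then have "k < i" by auto
    then show "g i = 0" by (rule assms(1))
  qed
qed (use assms(2) in auto)

definition EE :: "nat \<Rightarrow> 'a::comm_ring_1 \<Rightarrow> 'a" where
  "EE n t = (\<Sum>i\<le>n. of_nat ((n - i) choose i) * t ^ i)"
definition PP :: "nat \<Rightarrow> 'a::comm_ring_1 \<Rightarrow> 'a" where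
  "PP n y = (\<Sum>j\<le>n. of_nat (n choose (2*j)) * y ^ j)"
definition QQ :: "nat \<Rightarrow> 'a::comm_ring_1 \<Rightarrow> 'a" where
  "QQ n y = (\<Sum>j\<le>n. of_nat (n choose (2*j+1)) * y ^ j)"

lemma EE_range: "n div 2 \<le> m \<Longrightarrow> EE n t = (\<Sum>i\<le>m. of_nat ((n - i) choose i) * t ^ i)"
proof -
  assume m: "n div 2 \<le> m"
  have z: "\<And>i. n div 2 < i \<Longrightarrow> of_nat ((n - i) choose i) * t ^ i = (0::'a)"
  proof -
    fix i assume "n div 2 < i" then have "n - i < i" using div_mult_mod_eq[of n 2] mod_less_divisor[of 2 n] by linarith
    then show "of_nat ((n - i) choose i) * t ^ i = (0::'a)" by (simp add: binomial_eq_0)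
  qed
  show ?thesis unfolding EE_def
    using sum_range_cut[of "n div 2" "\<lambda>i. of_nat ((n - i) choose i) * t ^ i", OF z m]
      sum_range_cut[of "n div 2" "\<lambda>i. of_nat ((n - i) choose i) * t ^ i", OF z div_le_dividend]
    by simp
qed

lemma PP_range: "n div 2 \<le> m \<Longrightarrow> PP n y = (\<Sum>j\<le>m. of_nat (n choose (2*j)) * y ^ j)"
proof -
  assume m: "n div 2 \<le> m"
  have z: "\<And>i. n div 2 < i \<Longrightarrow> of_nat (n choose (2*i)) * y ^ i = (0::'a)"
  proof -
    fix i assume "n div 2 < i" then have "n < 2*i" using div_mult_mod_eq[of n 2] mod_less_divisor[of 2 n] by linarith
    then show "of_nat (n choose (2*i)) * y ^ i = (0::'a)" by (simp add: binomial_eq_0)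
  qed
  show ?thesis unfolding PP_def
    using sum_range_cut[of "n div 2" "\<lambda>i. of_nat (n choose (2*i)) * y ^ i", OF z m]
      sum_range_cut[of "n div 2" "\<lambda>i. of_nat (n choose (2*i)) * y ^ i", OF z div_le_dividend]
    by simp
qed

lemma QQ_range: "n div 2 \<le> m \<Longrightarrow> QQ n y = (\<Sum>j\<le>m. of_nat (n choose (2*j+1)) * y ^ j)"
proof -
  assume m: "n div 2 \<le> m"
  have z: "\<And>i. n div 2 < i \<Longrightarrow> of_nat (n choose (2*i+1)) * y ^ i = (0::'a)"
  proof -
    fix i assume "n div 2 < i" then have "n < 2*i+1" using div_mult_mod_eq[of n 2] mod_less_divisor[of 2 n] by linarith
    then show "of_nat (n choose (2*i+1)) * y ^ i = (0::'a)" by (simp add: binomial_eq_0)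
  qed
  show ?thesis unfolding QQ_def
    using sum_range_cut[of "n div 2" "\<lambda>i. of_nat (n choose (2*i+1)) * y ^ i", OF z m]
      sum_range_cut[of "n div 2" "\<lambda>i. of_nat (n choose (2*i+1)) * y ^ i", OF z div_le_dividend]
    by simp
qed

lemma QQ_Suc: "QQ (Suc n) y = PP n y + QQ n y"
proof -
  have "QQ (Suc n) y = (\<Sum>j\<le>Suc n. of_nat (n choose (2*j)) * y ^ j + of_nat (n choose (2*j+1)) * y ^ j)"
    unfolding QQ_def by (intro sum.cong) (auto simp: algebra_simps)
  also have "\<dots> = PP n y + QQ n y"
    by (simp add: sum.distrib PP_range[of n "Suc n"] QQ_range[of n "Suc n"])
  finally show ?thesis .
qed

lemma PP_Suc: "PP (Suc n) y = PP n y + y * QQ n y"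
proof -
  have "PP (Suc n) y = 1 + (\<Sum>k\<le>n. of_nat (Suc n choose (2*k+2)) * y ^ Suc k)"
    unfolding PP_def by (subst sum.atMost_Suc_shift) (simp add: mult_2 add_ac)
  also have "\<dots> = 1 + (\<Sum>k\<le>n. of_nat (n choose (2*k+2)) * y ^ Suc k) + y * (\<Sum>k\<le>n. of_nat (n choose (2*k+1)) * y ^ k)"
    by (simp add: sum.distrib sum_distrib_left algebra_simps numeral_2_eq_2)
  also have "1 + (\<Sum>k\<le>n. of_nat (n choose (2*k+2)) * y ^ Suc k) = (\<Sum>j\<le>Suc n. of_nat (n choose (2*j)) * y ^ j)"
    by (subst sum.atMost_Suc_shift) (simp add: mult_2 add_ac)
  also have "\<dots> = PP n y" by (rule PP_range[symmetric]) simp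
  finally show ?thesis unfolding QQ_def .
qed

lemma EE_rec: "EE (Suc (Suc n)) t = EE (Suc n) t + t * EE n t"
proof -
  have pas: "\<And>k. k \<le> Suc n \<Longrightarrow> ((Suc n - k) choose Suc k) = ((n - k) choose k) + ((n - k) choose Suc k)"
  proof -
    fix k assume "k \<le> Suc n"
    then consider "k \<le> n" | "k = Suc n" by linarith
    then show "((Suc n - k) choose Suc k) = ((n - k) choose k) + ((n - k) choose Suc k)"
    proof cases
      case 1 then have "Suc n - k = Suc (n - k)" by simp
      then show ?thesis by simp
    qed simp
  qed
  have "EE (Suc (Suc n)) t = 1 + (\<Sum>k\<le>Suc n. of_nat ((Suc n - k) choose Suc k) * t ^ Suc k)"
    unfolding EE_def by (subst sum.atMost_Suc_shift) simp
  also have "\<dots> = 1 + (\<Sum>k\<le>Suc n. of_nat ((n - k) choose Suc k) * t ^ Suc k)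
        + t * (\<Sum>k\<le>Suc n. of_nat ((n - k) choose k) * t ^ k)"
  proof -
    have "(\<Sum>k\<le>Suc n. of_nat ((Suc n - k) choose Suc k) * t ^ Suc k)
       = (\<Sum>k\<le>Suc n. of_nat ((n - k) choose Suc k) * t ^ Suc k + t * (of_nat ((n - k) choose k) * t ^ k))"
      by (rule sum.cong) (simp_all add: pas algebra_simps)
    then show ?thesis by (simp add: sum.distrib sum_distrib_left)
  qed
  also have "1 + (\<Sum>k\<le>Suc n. of_nat ((n - k) choose Suc k) * t ^ Suc k)
      = (\<Sum>i\<le>Suc (Suc n). of_nat ((Suc n - i) choose i) * t ^ i)"
    by (subst (2) sum.atMost_Suc_shift) simp
  also have "\<dots> = EE (Suc n) t" by (rule EE_range[symmetric]) simp
  also have "(\<Sum>k\<le>Suc n. of_nat ((n - k) choose k) * t ^ k) = EE n t"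
    by (rule EE_range[symmetric]) simp
  finally show ?thesis .
qed

lemma EE_QQ: "2 ^ n * EE n (- x) = QQ (Suc n) (1 - 4 * x :: 'a::comm_ring_1)"
proof (induction n rule: less_induct)
  case (less n)
  show ?case
  proof (cases n)
    case 0
    have "(0::nat) choose 2 = 0" by (simp add: numeral_2_eq_2)
    then show ?thesis using 0 by (simp add: EE_def QQ_def binomial_eq_0)
  next
    case (Suc m) note nm = this
    show ?thesis
    proof (cases m)
      case 0 then show ?thesis proof -
        have "(0::nat) choose 2 = 0" by (simp add: numeral_2_eq_2)
        then show ?thesis using nm 0 by (simp add: EE_def QQ_def numeral_2_eq_2)
      qed
    next
      case (Suc k)
      have i1: "2 ^ Suc k * EE (Suc k) (- x) = QQ (Suc (Suc k)) (1 - 4 * x :: 'a)" using less.IH[of "Suc k"] nm Suc by simp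
      have i2: "2 ^ k * EE k (- x) = QQ (Suc k) (1 - 4 * x :: 'a)" using less.IH[of "k"] nm Suc by simp
      have r: "QQ (Suc (Suc (Suc k))) (1 - 4 * x :: 'a) = 2 * QQ (Suc (Suc k)) (1 - 4 * x) - 4 * x * QQ (Suc k) (1 - 4*x)"
        by (simp add: QQ_Suc PP_Suc algebra_simps)
      have c: "2 ^ Suc (Suc k) * EE (Suc (Suc k)) (- x) = 2 * (2 ^ Suc k * EE (Suc k) (- x)) - 4 * x * (2 ^ k * EE k (- x) :: 'a)"
        by (simp add: EE_rec algebra_simps)
      have "2 ^ Suc (Suc k) * EE (Suc (Suc k)) (- x) = QQ (Suc (Suc (Suc k))) (1 - 4 * x :: 'a)"
        by (rule trans[OF c[unfolded i1 i2] r[symmetric]])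
      then show ?thesis using nm Suc by simp
    qed
  qed
qed


lemma D3_coeff_0: "n \<ge> 1 \<Longrightarrow> D3_coeff n 0 = 1"
  by (simp add: D3_coeff_def)

lemma D3_coeff_Suc:
  assumes "2 * Suc k \<le> n"
  shows "D3_coeff n (Suc k) = int ((n - Suc k) choose Suc k) - 2 * int ((n - Suc k - 1) choose k)"
proof -
  define m where "m = n - Suc k"
  have mk: "Suc k \<le> m" "n = m + Suc k" using assms unfolding m_def by auto
  have ab: "Suc k * (m choose Suc k) = m * ((m - 1) choose k)" by (rule binomial_absorption)
  have ab': "int (Suc k) * int (m choose Suc k) = int m * int ((m - 1) choose k)"
    using arg_cong[OF ab, of int] by (simp only: of_nat_mult)
  have "(int n - 3 * int (Suc k)) * int (m choose Suc k)
      = int m * int (m choose Suc k) - 2 * (int (Suc k) * int (m choose Suc k))"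
    using mk by (simp add: algebra_simps)
  also have "\<dots> = int m * (int (m choose Suc k) - 2 * int ((m - 1) choose k))"
    unfolding ab' by (simp add: algebra_simps)
  finally have eq: "(int n - 3 * int (Suc k)) * int (m choose Suc k) = int m * (int (m choose Suc k) - 2 * int ((m - 1) choose k))" .
  have m0: "int m \<noteq> 0" using mk by simp
  show ?thesis unfolding D3_coeff_def m_def[symmetric] eq using m0 by simp
qed

lemma poly_D3_1: "n \<ge> 1 \<Longrightarrow> poly (D3 n (1::'a::comm_ring_1)) x = (\<Sum>i\<le>n div 2. of_int (D3_coeff n i) * (- x) ^ i)"
  by (simp add: D3_def poly_sum poly_power)

lemma poly_D3_EE:
  fixes x :: "'a::comm_ring_1"
  shows "poly (D3 (Suc (Suc m)) 1) x = EE (Suc (Suc m)) (- x) + 2 * x * EE m (- x)"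
proof -
  define h where "h = m div 2"
  define t where "t = - x"
  have nd: "Suc (Suc m) div 2 = Suc h" unfolding h_def by simp
  have "poly (D3 (Suc (Suc m)) 1) x = (\<Sum>i\<le>Suc h. of_int (D3_coeff (Suc (Suc m)) i) * t ^ i)"
    using poly_D3_1[of "Suc (Suc m)" x] nd unfolding t_def by simp
  also have "\<dots> = 1 + (\<Sum>k\<le>h. of_int (D3_coeff (Suc (Suc m)) (Suc k)) * t ^ Suc k)"
    by (subst sum.atMost_Suc_shift) (simp add: D3_coeff_0)
  also have "(\<Sum>k\<le>h. of_int (D3_coeff (Suc (Suc m)) (Suc k)) * t ^ Suc k)
     = (\<Sum>k\<le>h. of_nat ((Suc m - k) choose Suc k) * t ^ Suc k - 2 * t * (of_nat ((m - k) choose k) * t ^ k))"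
  proof (rule sum.cong)
    fix k assume "k \<in> {..h}"
    then have "2 * Suc k \<le> Suc (Suc m)" unfolding h_def by auto
    then show "of_int (D3_coeff (Suc (Suc m)) (Suc k)) * t ^ Suc k
       = of_nat ((Suc m - k) choose Suc k) * t ^ Suc k - 2 * t * (of_nat ((m - k) choose k) * t ^ k)"
      by (simp add: D3_coeff_Suc algebra_simps)
  qed simp
  also have "\<dots> = (\<Sum>k\<le>h. of_nat ((Suc m - k) choose Suc k) * t ^ Suc k) - 2 * t * (\<Sum>k\<le>h. of_nat ((m - k) choose k) * t ^ k)"
    by (simp add: sum_subtractf sum_distrib_left)
  also have "(\<Sum>k\<le>h. of_nat ((m - k) choose k) * t ^ k) = EE m t"
    by (rule EE_range[symmetric]) (simp add: h_def)
  also have "1 + ((\<Sum>k\<le>h. of_nat ((Suc m - k) choose Suc k) * t ^ Suc k) - 2 * t * EE m t)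
      = (\<Sum>i\<le>Suc h. of_nat ((Suc (Suc m) - i) choose i) * t ^ i) - 2 * t * EE m t"
    by (subst sum.atMost_Suc_shift) simp
  also have "(\<Sum>i\<le>Suc h. of_nat ((Suc (Suc m) - i) choose i) * t ^ i) = EE (Suc (Suc m)) t"
    by (rule EE_range[symmetric]) (simp add: nd h_def)
  finally show ?thesis unfolding t_def by simp
qed

lemma poly_f_PQ:
  fixes y :: "'a::comm_ring_1"
  assumes "even n"
  shows "poly (f_poly n) y = 3 * QQ n y - PP n y"
proof -
  define h where "h = n div 2"
  have n2: "n = 2 * h" using assms unfolding h_def by simp
  have "3 * QQ n y - PP n y = (\<Sum>j\<le>h. of_int (3 * int (n choose (2*j+1)) - int (n choose (2*j))) * y ^ j)"
    using QQ_range[of n h y] PP_range[of n h y] unfolding h_def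
    by (simp add: sum_subtractf sum_distrib_left algebra_simps)
  also have "\<dots> = (\<Sum>j<h. of_int (3 * int (n choose (2*j+1)) - int (n choose (2*j))) * y ^ j) - y ^ h"
    by (simp add: lessThan_Suc_atMost[symmetric] n2 binomial_eq_0)
  also have "\<dots> = poly (f_poly n) y"
    unfolding f_poly_def h_def by (simp add: poly_sum poly_monom)
  finally show ?thesis by simp
qed

lemma main_ring:
  fixes x :: "'a::comm_ring_1"
  assumes "even n"
  shows "2 ^ n * poly (D3 n 1) x = poly (f_poly n) (1 - 4 * x)"
proof (cases n)
  case 0 then show ?thesis by (simp add: D3_def f_poly_def)
next
  case (Suc n1)
  then obtain m where n: "n = Suc (Suc m)" using assms by (cases n1) auto
  have em: "even m" using assms n by simp
  define y where "y = 1 - 4 * x"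
  have e1: "2 ^ Suc (Suc m) * EE (Suc (Suc m)) (- x) = QQ (Suc (Suc (Suc m))) y"
    unfolding y_def by (rule EE_QQ)
  have e2: "2 ^ m * EE m (- x) = QQ (Suc m) y"
    unfolding y_def by (rule EE_QQ)
  have "2 ^ n * poly (D3 n 1) x = 2 ^ Suc (Suc m) * EE (Suc (Suc m)) (- x) + 8 * x * (2 ^ m * EE m (- x))"
    unfolding n poly_D3_EE by (simp add: algebra_simps)
  also have "\<dots> = QQ (Suc (Suc (Suc m))) y + 8 * x * QQ (Suc m) y" unfolding e1 e2 ..
  also have "\<dots> = 3 * QQ (Suc (Suc m)) y - PP (Suc (Suc m)) y"
    by (simp add: QQ_Suc PP_Suc y_def algebra_simps)
  also have "\<dots> = poly (f_poly n) y" using poly_f_PQ[OF assms, of y] n by simp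
  finally show ?thesis unfolding y_def .
qed

lemma bij_affine:
  fixes a b :: "'a::field"
  assumes "a \<noteq> 0"
  shows "bij (\<lambda>z. a * z + b)"
  unfolding bij_def
proof
  show "inj (\<lambda>z. a * z + b)" using assms by (auto intro: injI)
  show "surj (\<lambda>z. a * z + b)"
  proof (rule surjI)
    fix w show "a * ((w - b) / a) + b = w" using assms by simp
  qed
qed

theorem theorem3p2:
  fixes p e n :: nat and x :: "'a::{field,finite}"
  assumes "prime p" and "p > 3"
    and "CHAR('a) = p" and "CARD('a) = p ^ e"
    and "even n"
  shows "poly (D3 n 1) x = (1 / 2 ^ n) * poly (f_poly n) (1 - 4 * x)
       \<and> (permutation_polynomial (D3 n (1::'a)) \<longleftrightarrow> permutation_polynomial (f_poly n :: 'a poly))"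
proof -
  have two: "(2::'a) \<noteq> 0"
  proof
    assume "(2::'a) = 0"
    then have "of_nat 2 = (0::'a)" by simp
    then have "p dvd 2" using assms(3) of_nat_eq_0_iff_char_dvd by metis
    then have "p \<le> 2" by (simp add: dvd_imp_le)
    then show False using assms(2) by simp
  qed
  have four: "(4::'a) \<noteq> 0"
  proof -
    have "(2::'a) * 2 \<noteq> 0" using two two by (rule no_zero_divisors)
    then show ?thesis by simp
  qed
  have pn: "(2::'a) ^ n \<noteq> 0" using two by simp
  have id: "\<And>c::'a. poly (D3 n 1) c = (1 / 2 ^ n) * poly (f_poly n) (1 - 4 * c)"
  proof -
    fix c :: 'a
    have "2 ^ n * poly (D3 n 1) c = poly (f_poly n) (1 - 4 * c)" by (rule main_ring[OF assms(5)])
    then show "poly (D3 n 1) c = (1 / 2 ^ n) * poly (f_poly n) (1 - 4 * c)"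
      using pn by (simp add: field_simps)
  qed
  let ?D = "\<lambda>c. poly (D3 n (1::'a)) c" and ?F = "\<lambda>c. poly (f_poly n :: 'a poly) c"
  have b1: "bij (\<lambda>z::'a. (- 4) * z + 1)" using four by (intro bij_affine) simp
  have b2: "bij (\<lambda>z::'a. (1 / 2 ^ n) * z + 0)" using pn by (intro bij_affine) simp
  have b3: "bij (\<lambda>z::'a. (- 1 / 4) * z + 1 / 4)" using four by (intro bij_affine) simp
  have b4: "bij (\<lambda>z::'a. (2 ^ n) * z + 0)" using pn by (intro bij_affine) simp
  have c1: "?D = (\<lambda>z::'a. (1 / 2 ^ n) * z + 0) \<circ> ?F \<circ> (\<lambda>z::'a. (- 4) * z + 1)"
    by (rule ext) (simp add: id)
  have c2: "?F = (\<lambda>z::'a. (2 ^ n) * z + 0) \<circ> ?D \<circ> (\<lambda>z::'a. (- 1 / 4) * z + 1 / 4)"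
  proof (rule ext)
    fix z :: 'a
    have "1 - 4 * ((- 1 / 4) * z + 1 / 4) = z" using four by (simp add: field_simps)
    then show "?F z = ((\<lambda>z::'a. (2 ^ n) * z + 0) \<circ> ?D \<circ> (\<lambda>z::'a. (- 1 / 4) * z + 1 / 4)) z"
      using pn by (simp add: id)
  qed
  have bb: "bij ?D \<longleftrightarrow> bij ?F"
  proof
    assume "bij ?D"
    then show "bij ?F" unfolding c2 by (intro bij_comp b3 b4)
  next
    assume "bij ?F"
    then show "bij ?D" unfolding c1 by (intro bij_comp b1 b2)
  qed
  show ?thesis unfolding permutation_polynomial_def using id[of x] bb by blast
qed

end
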